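(* For every $p\in I$, the Dirac mass $\mu_p\in\mathcal{S}(p)$ (no information disclosure) attains the maximum in $V_\delta(p)=\max_{\mu\in\mathcal{S}(p)}\{(1-\delta)\mu(\{q\in I\})+\delta\,\mathbb{E}_\mu[V_\delta(\phi(q))]\}$; that is, at any $p\in I$ it is optimal for the advisor not to provide information.
   Context: Let $\Omega$ be a finite set, identify each $\omega$ with a unit vector of $\mathbb{R}^\Omega$ and $\Delta(\Omega)$ with the unit simplex. Let $M$ be the transition matrix of an irreducible Markov chain on $\Omega$, $r:\Omega\to\mathbb{R}$, $\delta\in[0,1)$. Let $I=\{p\in\Delta(\Omega):\sum_\omega p(\omega)r(\omega)\ge0\}$ and $\phi(q)=qM$. $\mathcal{S}(p)$ is the set of Borel probability measures on $\Delta(\Omega)$ with mean $p$ and $\mu_p$ the Dirac mass at $p$. $V_\delta$ is the value of the advisor's problem: at each stage, at belief $p_n$, choose $\mu\in\mathcal{S}(p_n)$, draw a posterior $q_n\sim\mu$, receive $\mathbf{1}_{\{q_n\in I\}}$, and move to $p_{n+1}=\phi(q_n)$, with payoff $\mathbb{E}[(1-\delta)\sum_n\delta^{n-1}\mathbf{1}_{\{q_n\in I\}}]$; $V_\delta$ is the unique solution of the dynamic programming equation in the claim. *)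

theory Defs
  imports "HOL-Probability.Probability"
begin

text \<open>States: a finite type 'w. Beliefs are vectors in real^'w; Delta(Omega) is the unit belief_simplex.\<close>

definition belief_simplex :: "(real^'w::finite) set" where
  "belief_simplex = {p. (\<forall>w. 0 \<le> p $ w) \<and> (\<Sum>w\<in>UNIV. p $ w) = 1}"

definition stochastic :: "real^'w^'w::finite \<Rightarrow> bool" where
  "stochastic M = ((\<forall>i j. 0 \<le> M $ i $ j) \<and> (\<forall>i. (\<Sum>j\<in>UNIV. M $ i $ j) = 1))"

definition irreducible_chain :: "real^'w^'w::finite \<Rightarrow> bool" where
  "irreducible_chain M = (\<forall>i j. (i, j) \<in> {(a, b). 0 < M $ a $ b}\<^sup>*)"

definition phi :: "real^'w^'w::finite \<Rightarrow> real^'w \<Rightarrow> real^'w" where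
  "phi M q = q v* M"

definition Iset :: "('w::finite \<Rightarrow> real) \<Rightarrow> (real^'w) set" where
  "Iset r = {p \<in> belief_simplex. 0 \<le> (\<Sum>w\<in>UNIV. p $ w * r w)}"

text \<open>S(p): Borel probability measures on Delta(Omega) (i.e. concentrated on the simplex)
  with mean p.\<close>

definition splits :: "real^'w::finite \<Rightarrow> (real^'w) measure set" where
  "splits p = {\<mu>. sets \<mu> = sets borel \<and> prob_space \<mu> \<and> emeasure \<mu> belief_simplex = 1
                 \<and> integrable \<mu> (\<lambda>q. q) \<and> integral\<^sup>L \<mu> (\<lambda>q. q) = p}"

definition dp_obj :: "real \<Rightarrow> real^'w^'w::finite \<Rightarrow> ('w \<Rightarrow> real) \<Rightarrow> (real^'w \<Rightarrow> real)
                      \<Rightarrow> (real^'w) measure \<Rightarrow> real" where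
  "dp_obj \<delta> M r V \<mu> = (1 - \<delta>) * measure \<mu> (Iset r) + \<delta> * integral\<^sup>L \<mu> (\<lambda>q. V (phi M q))"

end

theory Submission
  imports Defs
begin


lemma simplex_sets: "belief_simplex \<in> sets (borel :: (real^'w::finite) measure)"
  unfolding belief_simplex_def by measurable

lemma Iset_sets: "Iset r \<in> sets (borel :: (real^'w::finite) measure)"
  unfolding Iset_def belief_simplex_def by measurable

lemma phi_simplex:
  assumes "stochastic M" "q \<in> belief_simplex"
  shows "phi M q \<in> belief_simplex"
proof -
  have nn: "\<forall>i j. 0 \<le> M $ i $ j" and rs: "\<forall>i. (\<Sum>j\<in>UNIV. M $ i $ j) = 1"
    using assms(1) by (auto simp: stochastic_def)
  have q: "\<forall>w. 0 \<le> q $ w" "(\<Sum>w\<in>UNIV. q $ w) = 1" using assms(2) by (auto simp: belief_simplex_def)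
  have "(\<Sum>j\<in>UNIV. (\<Sum>i\<in>UNIV. q $ i * M $ i $ j)) = (\<Sum>i\<in>UNIV. q $ i * (\<Sum>j\<in>UNIV. M $ i $ j))"
    by (subst sum.swap) (simp add: sum_distrib_left)
  also have "\<dots> = 1" using rs q by simp
  finally show ?thesis using nn q
    by (auto simp: belief_simplex_def phi_def vector_matrix_mult_def intro!: sum_nonneg)
qed

lemma phi_lin: "phi M (a *\<^sub>R x + b *\<^sub>R y) = a *\<^sub>R phi M x + b *\<^sub>R phi M y"
  by (simp add: phi_def vec_eq_iff vector_matrix_mult_def sum.distrib sum_distrib_left algebra_simps)

lemma phi_meas: "phi M \<in> borel_measurable borel"
proof -
  have "continuous_on UNIV (phi M)"
    unfolding phi_def vector_matrix_mult_def
    by (intro continuous_on_vec_lambda continuous_intros)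
  then show ?thesis by (rule borel_measurable_continuous_onI)
qed



lemma splitsD:
  assumes "\<mu> \<in> splits p"
  shows "sets \<mu> = sets borel" "prob_space \<mu>" "AE q in \<mu>. q \<in> belief_simplex"
    "integrable \<mu> (\<lambda>q. q)" "integral\<^sup>L \<mu> (\<lambda>q. q) = p"
proof -
  show s: "sets \<mu> = sets borel" and ps: "prob_space \<mu>"
    "integrable \<mu> (\<lambda>q. q)" "integral\<^sup>L \<mu> (\<lambda>q. q) = p"
    using assms by (auto simp: splits_def)
  interpret prob_space \<mu> by fact
  have "emeasure \<mu> belief_simplex = 1" using assms by (auto simp: splits_def)
  then have "prob belief_simplex = 1" by (simp add: measure_def)
  moreover have "belief_simplex \<in> events" using s simplex_sets by auto
  ultimately show "AE q in \<mu>. q \<in> belief_simplex" using AE_prob_1 by blast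
qed

definition mix :: "real \<Rightarrow> 'a measure \<Rightarrow> 'a measure \<Rightarrow> 'a measure" where
  "mix l m1 m2 = measure_pmf (bernoulli_pmf l) \<bind> (\<lambda>b. if b then m1 else m2)"

lemma mix_facts:
  fixes m1 m2 :: "(real^'w::finite) measure"
  assumes "prob_space m1" "prob_space m2" "sets m1 = sets borel" "sets m2 = sets borel"
    and l: "0 \<le> l" "l \<le> 1"
  shows "sets (mix l m1 m2) = sets borel" "prob_space (mix l m1 m2)"
    "\<And>f B. f \<in> borel_measurable borel \<Longrightarrow> (\<And>x. \<bar>f x\<bar> \<le> B) \<Longrightarrow>
        integral\<^sup>L (mix l m1 m2) f = l * integral\<^sup>L m1 f + (1 - l) * integral\<^sup>L m2 f"
proof -
  let ?N = "\<lambda>b. if b then m1 else m2"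
  have sp: "subprob_space m1" "subprob_space m2" using assms prob_space_imp_subprob_space by auto
  have N: "?N \<in> measurable (measure_pmf (bernoulli_pmf l)) (subprob_algebra borel)"
    using sp assms(3,4) by (auto simp: measurable_def space_subprob_algebra)
  show "sets (mix l m1 m2) = sets borel" unfolding mix_def
    by (rule sets_bind[OF _ ]) (use assms in auto)
  show "prob_space (mix l m1 m2)" unfolding mix_def
    by (rule measure_pmf.prob_space_bind[OF _ N]) (use assms in auto)
  fix f :: "real^'w \<Rightarrow> real" and B assume f: "f \<in> borel_measurable borel" "\<And>x. \<bar>f x\<bar> \<le> B"
  have "integral\<^sup>L (mix l m1 m2) f = \<integral>b. integral\<^sup>L (?N b) f \<partial>measure_pmf (bernoulli_pmf l)"
    unfolding mix_def
    by (rule integral_bind[where B'=1, OF f(1) f(2) N]) (auto intro: prob_space_imp_subprob_space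
       simp: sp subprob_space.subprob_emeasure_le_1 measure_pmf.finite_measure_axioms)
  also have "\<dots> = l * integral\<^sup>L m1 f + (1 - l) * integral\<^sup>L m2 f"
    using l by simp
  finally show "integral\<^sup>L (mix l m1 m2) f = l * integral\<^sup>L m1 f + (1 - l) * integral\<^sup>L m2 f" .
qed

lemma int_comp:
  fixes m :: "(real^'w::finite) measure"
  assumes "integrable m (\<lambda>q. q)"
  shows "(integral\<^sup>L m (\<lambda>q. q)) $ w = integral\<^sup>L m (\<lambda>q. q $ w)"
  using integral_inner_right[of "axis w 1" m "\<lambda>q. q"] assms
  by (simp add: cart_eq_inner_axis inner_commute)

lemma simplex_comp_le1:
  assumes "q \<in> belief_simplex" shows "0 \<le> q $ w" "q $ w \<le> 1"
proof -
  have "\<forall>w. 0 \<le> q $ w" "(\<Sum>w\<in>UNIV. q $ w) = 1" using assms by (auto simp: belief_simplex_def)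
  moreover have "q $ w \<le> (\<Sum>w\<in>UNIV. q $ w)"
    using calculation by (intro member_le_sum) auto
  ultimately show "0 \<le> q $ w" "q $ w \<le> 1" by auto
qed

lemma simplex_norm: "q \<in> belief_simplex \<Longrightarrow> norm q \<le> 1"
  using norm_le_l1_cart[of q] by (auto simp: belief_simplex_def)

lemma clip_int:
  fixes m :: "(real^'w::finite) measure"
  assumes "AE q in m. q \<in> belief_simplex" "sets m = sets borel" "f \<in> borel_measurable borel"
  shows "integral\<^sup>L m f = integral\<^sup>L m (\<lambda>q. if q \<in> belief_simplex then f q else 0)"
proof (rule integral_cong_AE)
  show "f \<in> borel_measurable m" using assms(2,3) measurable_cong_sets by blast
  have "(\<lambda>q. if q \<in> belief_simplex then f q else 0) \<in> borel_measurable borel"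
    using assms(3) simplex_sets by measurable
  then show "(\<lambda>q. if q \<in> belief_simplex then f q else 0) \<in> borel_measurable m"
    using assms(2) measurable_cong_sets by blast
  show "AE x in m. f x = (if x \<in> belief_simplex then f x else 0)" using assms(1) by auto
qed

lemma mix_splits:
  fixes m1 m2 :: "(real^'w::finite) measure"
  assumes m1: "m1 \<in> splits x" and m2: "m2 \<in> splits y" and l: "0 \<le> l" "l \<le> 1"
  shows "mix l m1 m2 \<in> splits (l *\<^sub>R x + (1 - l) *\<^sub>R y)"
    "\<And>f B. f \<in> borel_measurable borel \<Longrightarrow> (\<And>x. x \<in> belief_simplex \<Longrightarrow> \<bar>f x\<bar> \<le> B) \<Longrightarrow>
        integral\<^sup>L (mix l m1 m2) f = l * integral\<^sup>L m1 f + (1 - l) * integral\<^sup>L m2 f"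
    "\<And>A. A \<in> sets borel \<Longrightarrow> measure (mix l m1 m2) A = l * measure m1 A + (1 - l) * measure m2 A"
proof -
  note d1 = splitsD[OF m1] and d2 = splitsD[OF m2]
  note mf = mix_facts[OF d1(2) d2(2) d1(1) d2(1) l]
  interpret P: prob_space "mix l m1 m2" by (rule mf(2))
  interpret P1: prob_space m1 by (rule d1(2))
  interpret P2: prob_space m2 by (rule d2(2))
  show meas: "measure (mix l m1 m2) A = l * measure m1 A + (1 - l) * measure m2 A" if A: "A \<in> sets borel" for A
  proof -
    have "integral\<^sup>L (mix l m1 m2) (indicator A) = l * integral\<^sup>L m1 (indicator A) + (1 - l) * integral\<^sup>L m2 (indicator A)"
      by (rule mf(3)[where B=1]) (use A in auto)
    then show ?thesis using A mf(1) d1(1) d2(1)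
      by (simp add: P.emeasure_eq_measure P1.emeasure_eq_measure P2.emeasure_eq_measure)
  qed
  have AEs: "AE q in mix l m1 m2. q \<in> belief_simplex"
  proof -
    have "P.prob belief_simplex = 1"
    proof -
      have "P1.prob belief_simplex = 1" using m1 by (simp add: splits_def measure_def)
      moreover have "P2.prob belief_simplex = 1" using m2 by (simp add: splits_def measure_def)
      ultimately show ?thesis using meas[OF simplex_sets] by simp
    qed
    then show ?thesis using P.AE_prob_1 by blast
  qed
  show gen: "integral\<^sup>L (mix l m1 m2) f = l * integral\<^sup>L m1 f + (1 - l) * integral\<^sup>L m2 f"
    if f: "f \<in> borel_measurable borel" and B: "\<And>x. x \<in> belief_simplex \<Longrightarrow> \<bar>f x\<bar> \<le> B" for f B
  proof -
    let ?g = "\<lambda>q. if q \<in> belief_simplex then f q else 0"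
    have gm: "?g \<in> borel_measurable borel" using f simplex_sets by measurable
    have gb: "\<And>x. \<bar>?g x\<bar> \<le> \<bar>B\<bar>" using B by (auto intro: order_trans[OF B abs_ge_self])
    have "integral\<^sup>L (mix l m1 m2) f = integral\<^sup>L (mix l m1 m2) ?g" by (rule clip_int[OF AEs mf(1) f])
    also have "\<dots> = l * integral\<^sup>L m1 ?g + (1 - l) * integral\<^sup>L m2 ?g" by (rule mf(3)[OF gm gb])
    also have "\<dots> = l * integral\<^sup>L m1 f + (1 - l) * integral\<^sup>L m2 f"
      using clip_int[OF d1(3) d1(1) f] clip_int[OF d2(3) d2(1) f] by simp
    finally show ?thesis .
  qed
  have intg: "integrable (mix l m1 m2) (\<lambda>q. q)"
    by (rule P.integrable_const_bound[where B=1]) (use AEs simplex_norm mf(1) in \<open>auto elim: AE_mp simp: measurable_cong_sets[OF mf(1) refl]\<close>)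
  have mean: "integral\<^sup>L (mix l m1 m2) (\<lambda>q. q) = l *\<^sub>R x + (1 - l) *\<^sub>R y"
  proof (rule vec_eq_iff[THEN iffD2], rule allI)
    fix w
    have "integral\<^sup>L (mix l m1 m2) (\<lambda>q. q) $ w = integral\<^sup>L (mix l m1 m2) (\<lambda>q. q $ w)"
      by (rule int_comp[OF intg])
    also have "\<dots> = l * integral\<^sup>L m1 (\<lambda>q. q $ w) + (1 - l) * integral\<^sup>L m2 (\<lambda>q. q $ w)"
      by (rule gen[of _ 1]) (use simplex_comp_le1 in force)+
    also have "\<dots> = (l *\<^sub>R x + (1 - l) *\<^sub>R y) $ w"
      using int_comp[OF d1(4), of w] int_comp[OF d2(4), of w] d1(5) d2(5) by simp
    finally show "integral\<^sup>L (mix l m1 m2) (\<lambda>q. q) $ w = (l *\<^sub>R x + (1 - l) *\<^sub>R y) $ w" .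
  qed
  have "emeasure (mix l m1 m2) belief_simplex = 1"
    using P.emeasure_eq_measure meas[OF simplex_sets] m1 m2
    by (simp add: splits_def measure_def)
  then show "mix l m1 m2 \<in> splits (l *\<^sub>R x + (1 - l) *\<^sub>R y)"
    unfolding splits_def using mf(1,2) intg mean by auto
qed



lemma supergrad:
  fixes h :: "'a::euclidean_space \<Rightarrow> real"
  assumes cD: "convex D" and e: "e > 0" "ball p e \<subseteq> D"
  and conc: "\<And>x y l. x \<in> D \<Longrightarrow> y \<in> D \<Longrightarrow> 0 \<le> l \<Longrightarrow> l \<le> 1 \<Longrightarrow>
          l * h x + (1 - l) * h y \<le> h (l *\<^sub>R x + (1 - l) *\<^sub>R y)"
  shows "\<exists>c. \<forall>x\<in>D. h x \<le> h p + c \<bullet> (x - p)"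
proof -
  define H where "H = {z. \<exists>x t. z = (x - p, t - h p) \<and> x \<in> D \<and> t < h x}"
  have "convex H"
  proof (rule convexI)
    fix z1 z2 and u v :: real
    assume z1: "z1 \<in> H" and z2: "z2 \<in> H" and uv0: "0 \<le> u" "0 \<le> v" "u + v = 1"
    then have uv: "0 \<le> u \<and> 0 \<le> v \<and> u + v = 1" by simp
    from z1 obtain x1 t1 where 1: "z1 = (x1 - p, t1 - h p)" "x1 \<in> D" "t1 < h x1"
      unfolding H_def by auto
    from z2 obtain x2 t2 where 2: "z2 = (x2 - p, t2 - h p)" "x2 \<in> D" "t2 < h x2"
      unfolding H_def by auto
    have v: "v = 1 - u" using uv by simp
    have xD: "u *\<^sub>R x1 + v *\<^sub>R x2 \<in> D" using cD 1 2 uv unfolding convex_def by blast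
    have "u * t1 + v * t2 < u * h x1 + v * h x2"
    proof (cases "u = 0")
      case True then show ?thesis using 2 v by simp
    next
      case False then have "u > 0" using uv by simp
      then have "u * t1 < u * h x1" using 1 by simp
      moreover have "v * t2 \<le> v * h x2" using 2 uv by (intro mult_left_mono) auto
      ultimately show ?thesis by linarith
    qed
    also have "\<dots> \<le> h (u *\<^sub>R x1 + v *\<^sub>R x2)" using conc[OF 1(2) 2(2), of u] uv v by simp
    finally have "u * t1 + v * t2 < h (u *\<^sub>R x1 + v *\<^sub>R x2)" .
    moreover have "u *\<^sub>R z1 + v *\<^sub>R z2 = ((u *\<^sub>R x1 + v *\<^sub>R x2) - p, (u * t1 + v * t2) - h p)"
      unfolding v using 1 2 by (simp add: algebra_simps)
    ultimately show "u *\<^sub>R z1 + v *\<^sub>R z2 \<in> H" using xD unfolding H_def by blast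
  qed
  moreover have "0 \<notin> H" unfolding H_def by (auto simp: zero_prod_def)
  ultimately obtain a where a: "a \<noteq> 0" "\<forall>z\<in>H. 0 \<le> inner a z"
    using separating_hyperplane_set_0 by blast
  obtain c' \<beta> where ab: "a = (c', \<beta>)" by (cases a)
  have key: "0 \<le> c' \<bullet> (x - p) + \<beta> * (t - h p)" if "x \<in> D" "t < h x" for x t
  proof -
    have "(x - p, t - h p) \<in> H" using that unfolding H_def by blast
    then show ?thesis using a(2) ab by (auto simp: inner_Pair)
  qed
  have pD: "p \<in> D" using e by auto
  have "\<beta> \<le> 0" using key[OF pD, of "h p - 1"] by simp
  moreover have "\<beta> \<noteq> 0"
  proof
    assume b0: "\<beta> = 0"
    define k where "k = e / 2 / (norm c' + 1)"
    have n1: "norm c' + 1 > 0" by (smt (verit) norm_ge_zero)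
    have k: "k > 0" using n1 unfolding k_def using e by (intro divide_pos_pos) auto
    have "k * norm c' < e"
    proof -
      have "k * norm c' \<le> k * (norm c' + 1)" using k by simp
      also have "\<dots> = e / 2" unfolding k_def using n1 by (simp add: field_simps)
      finally show ?thesis using e by simp
    qed
    then have "p - k *\<^sub>R c' \<in> ball p e" using k by (simp add: dist_norm)
    then have "p - k *\<^sub>R c' \<in> D" using e by auto
    from key[OF this, of "h (p - k *\<^sub>R c') - 1"] b0
    have "0 \<le> - k * (c' \<bullet> c')" by (simp add: inner_diff_right)
    then have "c' \<bullet> c' \<le> 0" using k by (simp add: mult_le_0_iff)
    then have "c' = 0" using inner_gt_zero_iff[of c'] by linarith
    then show False using a(1) ab b0 by (simp add: zero_prod_def)
  qed
  ultimately have bneg: "\<beta> < 0" by simp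
  show ?thesis
  proof (intro exI ballI)
    fix x assume xD: "x \<in> D"
    show "h x \<le> h p + ((-1/\<beta>) *\<^sub>R c') \<bullet> (x - p)"
    proof (rule ccontr)
      assume "\<not> ?thesis"
      then have "h x > h p + (-1/\<beta>) * (c' \<bullet> (x - p))" by simp
      define d where "d = h x - h p - (-1/\<beta>) * (c' \<bullet> (x - p))"
      have d: "d > 0" using \<open>h x > _\<close> by (simp add: d_def)
      have "0 \<le> c' \<bullet> (x - p) + \<beta> * (h x - d/2 - h p)" using key[OF xD, of "h x - d/2"] d by simp
      then have "0 \<le> (c' \<bullet> (x - p)) / (-\<beta>) - (h x - d/2 - h p)"
        using bneg by (simp add: field_simps)
      moreover have "(c' \<bullet> (x - p)) / (-\<beta>) = (-1/\<beta>) * (c' \<bullet> (x - p))" by simp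
      ultimately have "0 \<le> (-1/\<beta>) * (c' \<bullet> (x - p)) - (h x - d/2 - h p)" by simp
      moreover have "d = h x - h p - (-1/\<beta>) * (c' \<bullet> (x - p))" by (rule d_def)
      ultimately show False using d
        by linarith
    qed
  qed
qed



lemma jensen_simplex:
  fixes g :: "real^'w::finite \<Rightarrow> real" and \<mu> :: "(real^'w) measure"
  assumes conc: "\<And>x y l. x \<in> belief_simplex \<Longrightarrow> y \<in> belief_simplex \<Longrightarrow> 0 \<le> l \<Longrightarrow> l \<le> 1 \<Longrightarrow>
          l * g x + (1 - l) * g y \<le> g (l *\<^sub>R x + (1 - l) *\<^sub>R y)"
  and gm: "g \<in> borel_measurable borel" and gb: "\<And>q. q \<in> belief_simplex \<Longrightarrow> \<bar>g q\<bar> \<le> B"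
  and mu: "\<mu> \<in> splits p" and pS: "p \<in> belief_simplex"
  shows "integral\<^sup>L \<mu> g \<le> g p"
proof -
  note d = splitsD[OF mu]
  interpret P: prob_space \<mu> by (rule d(2))
  define S where "S = {w. 0 < p $ w}"
  have p0: "\<forall>w. 0 \<le> p $ w" and p1: "(\<Sum>w\<in>UNIV. p $ w) = 1" using pS by (auto simp: belief_simplex_def)
  have pout: "p $ w = 0" if "w \<notin> S" for w using p0[rule_format, of w] that unfolding S_def by simp
  have sumS: "(\<Sum>w\<in>S. x $ w) = 1" if "\<forall>w\<in>-S. x $ w = 0" "(\<Sum>w\<in>UNIV. x $ w) = 1" for x :: "real^'w"
  proof -
    have "(\<Sum>w\<in>S. x $ w) = (\<Sum>w\<in>UNIV. x $ w)"
      by (rule sum.mono_neutral_left) (use that in auto)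
    then show ?thesis using that by simp
  qed
  have pS1: "(\<Sum>w\<in>S. p $ w) = 1" using sumS[of p] pout p1 by auto
  have "S \<noteq> {}" using pS1 by auto
  then have npos: "real (card S) > 0" by (simp add: card_gt_0_iff)
  define n where "n = real (card S)"
  have n: "n > 0" using npos by (simp add: n_def)
  define A where "A x = (\<chi> w. if w \<in> S then x $ w + (1 - (\<Sum>v\<in>S. x $ v)) / n else 0)" for x :: "real^'w"
  have Acomb: "A (l *\<^sub>R x + (1 - l) *\<^sub>R y) = l *\<^sub>R A x + (1 - l) *\<^sub>R A y" for l x y
  proof -
    have sx: "(\<Sum>v\<in>S. (l *\<^sub>R x + (1 - l) *\<^sub>R y) $ v) = l * (\<Sum>v\<in>S. x $ v) + (1 - l) * (\<Sum>v\<in>S. y $ v)"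
      by (simp add: sum.distrib sum_distrib_left)
    show ?thesis unfolding A_def vec_eq_iff vec_lambda_beta sx using n
      by (auto simp: field_simps)
  qed
  define D where "D = {x. \<forall>w\<in>S. 0 \<le> A x $ w}"
  have AD: "A x \<in> belief_simplex" if "x \<in> D" for x
  proof -
    have "\<forall>w. 0 \<le> A x $ w" using that unfolding D_def by (auto simp: A_def)
    moreover have "(\<Sum>w\<in>UNIV. A x $ w) = 1"
    proof -
      have "(\<Sum>w\<in>UNIV. A x $ w) = (\<Sum>w\<in>UNIV. if w \<in> S then x $ w + (1 - (\<Sum>v\<in>S. x $ v)) / n else 0)"
        by (simp add: A_def)
      also have "\<dots> = (\<Sum>w\<in>S. x $ w + (1 - (\<Sum>v\<in>S. x $ v)) / n)"
        using sum.inter_restrict[of UNIV "\<lambda>w. x $ w + (1 - (\<Sum>v\<in>S. x $ v)) / n" S] by simp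
      also have "\<dots> = (\<Sum>w\<in>S. x $ w) + n * ((1 - (\<Sum>v\<in>S. x $ v)) / n)"
        by (simp add: sum.distrib n_def)
      also have "\<dots> = 1" using n by simp
      finally show ?thesis .
    qed
    ultimately show ?thesis by (simp add: belief_simplex_def)
  qed
  have cD: "convex D"
  proof (rule convexI)
    fix x y and u v :: real assume "x \<in> D" "y \<in> D" "0 \<le> u" "0 \<le> v" "u + v = 1"
    then show "u *\<^sub>R x + v *\<^sub>R y \<in> D"
      using Acomb[of u x y] unfolding D_def
      by (auto intro!: add_nonneg_nonneg mult_nonneg_nonneg simp: eq_diff_eq[symmetric])
  qed
  define h where "h x = g (A x)" for x
  have hconc: "l * h x + (1 - l) * h y \<le> h (l *\<^sub>R x + (1 - l) *\<^sub>R y)"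
    if "x \<in> D" "y \<in> D" "0 \<le> l" "l \<le> 1" for x y l
    unfolding h_def Acomb using conc[OF AD AD] that by blast
  have Aid: "A q = q" if "\<forall>w\<in>-S. q $ w = 0" "(\<Sum>w\<in>UNIV. q $ w) = 1" for q
    using that sumS[OF that] by (auto simp: A_def vec_eq_iff)
  have Ap: "A p = p" using Aid pout p1 by auto
  define U where "U = (\<Inter>w\<in>S. {x::real^'w. 0 < x $ w + (1 - (\<Sum>v\<in>S. x $ v)) / n})"
  have "open U" unfolding U_def
  proof (intro open_INT finite ballI)
    fix w
    show "open {x::real^'w. 0 < x $ w + (1 - (\<Sum>v\<in>S. x $ v)) / n}"
      by (intro open_Collect_less continuous_intros) (use n in auto)
  qed
  moreover have "p \<in> U" unfolding U_def using pS1 by (auto simp: S_def)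
  ultimately obtain e where e: "e > 0" "ball p e \<subseteq> U" using open_contains_ball by blast
  have "U \<subseteq> D" unfolding U_def D_def A_def by (auto intro: less_imp_le)
  with e have e': "ball p e \<subseteq> D" by auto
  obtain c where c: "\<forall>x\<in>D. h x \<le> h p + c \<bullet> (x - p)"
    using supergrad[OF cD e(1) e' hconc] by blast
  have AE0: "AE q in \<mu>. q $ w = 0" if w: "w \<notin> S" for w
  proof -
    have i: "integrable \<mu> (\<lambda>q. q $ w)"
      using integrable_inner_right[OF d(4), of "axis w 1"] by (simp add: cart_eq_inner_axis inner_commute)
    have "AE q in \<mu>. 0 \<le> q $ w" using d(3) by (auto elim: AE_mp simp: belief_simplex_def)
    moreover have "integral\<^sup>L \<mu> (\<lambda>q. q $ w) = 0" using int_comp[OF d(4), of w] d(5) pout[OF w] by simp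
    ultimately show ?thesis using integral_nonneg_eq_0_iff_AE[OF i] by simp
  qed
  have "AE q in \<mu>. \<forall>w\<in>-S. q $ w = 0"
    by (subst AE_finite_all) (use AE0 in auto)
  then have AEq: "AE q in \<mu>. g q \<le> g p + c \<bullet> q - c \<bullet> p"
    using d(3)
  proof eventually_elim
    case (elim q)
    have q1: "(\<Sum>w\<in>UNIV. q $ w) = 1" using elim(2) by (simp add: belief_simplex_def)
    have Aq: "A q = q" by (rule Aid[OF elim(1) q1])
    have "q \<in> D" using elim(2) Aq by (simp add: D_def belief_simplex_def)
    then have "h q \<le> h p + c \<bullet> (q - p)" using c by blast
    then show ?case unfolding h_def Aq Ap by (simp add: inner_diff_right)
  qed
  have gmu: "g \<in> borel_measurable \<mu>" using gm d(1) measurable_cong_sets by blast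
  have gi: "integrable \<mu> g"
    by (rule P.integrable_const_bound[where B=B]) (use d(3) gb gmu in \<open>auto elim: AE_mp\<close>)
  have ri: "integrable \<mu> (\<lambda>q. g p + c \<bullet> q - c \<bullet> p)"
    using integrable_inner_right[OF d(4), of c] by auto
  have "integral\<^sup>L \<mu> g \<le> integral\<^sup>L \<mu> (\<lambda>q. g p + c \<bullet> q - c \<bullet> p)"
    by (rule integral_mono_AE[OF gi ri AEq])
  also have "\<dots> = g p + c \<bullet> p - c \<bullet> p"
    using integrable_inner_right[OF d(4), of c] d(5) integral_inner_right[of c \<mu> "\<lambda>q. q"] d(4)
    by (simp add: integral_diff integral_add P.prob_space)
  finally show ?thesis by simp
qed



lemma simplex_comb:
  assumes "x \<in> belief_simplex" "y \<in> belief_simplex" "0 \<le> l" "l \<le> 1"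
  shows "l *\<^sub>R x + (1 - l) *\<^sub>R y \<in> belief_simplex"
proof -
  have x: "\<forall>w. 0 \<le> x $ w" "(\<Sum>w\<in>UNIV. x $ w) = 1" and y: "\<forall>w. 0 \<le> y $ w" "(\<Sum>w\<in>UNIV. y $ w) = 1"
    using assms(1,2) unfolding belief_simplex_def by auto
  have "\<forall>w. 0 \<le> (l *\<^sub>R x + (1 - l) *\<^sub>R y) $ w"
    using x y assms(3,4) by (auto intro!: add_nonneg_nonneg mult_nonneg_nonneg)
  moreover have "(\<Sum>w\<in>UNIV. (l *\<^sub>R x + (1 - l) *\<^sub>R y) $ w) = l * (\<Sum>w\<in>UNIV. x $ w) + (1 - l) * (\<Sum>w\<in>UNIV. y $ w)"
    by (simp add: sum.distrib sum_distrib_left)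
  ultimately show ?thesis using x y unfolding belief_simplex_def by simp
qed

lemma return_splits:
  fixes p :: "real^'w::finite"
  assumes "p \<in> belief_simplex"
  shows "return borel p \<in> splits p"
proof -
  interpret P: prob_space "return borel p" by (rule prob_space_return) simp
  have ae: "AE q in return borel p. norm q \<le> norm p"
    by (subst AE_return) auto
  have "integrable (return borel p) (\<lambda>q. q)"
    by (rule P.integrable_const_bound[OF ae]) simp
  moreover have "integral\<^sup>L (return borel p) (\<lambda>q. q) = p"
    by (rule integral_return) auto
  moreover have "emeasure (return borel p) belief_simplex = 1"
    using emeasure_return[OF simplex_sets, of p] assms by simp
  moreover have "sets (return borel p) = sets borel" by simp
  ultimately show ?thesis
    unfolding splits_def using P.prob_space_axioms by blast
qed

theorem corollary1:
  fixes M :: "real^'w^'w::finite" and r :: "'w \<Rightarrow> real" and \<delta> :: real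
    and V :: "real^'w \<Rightarrow> real" and p :: "real^'w"
  assumes "stochastic M" and "irreducible_chain M"
    and "0 \<le> \<delta>" and "\<delta> < 1"
    and "V \<in> borel_measurable borel" and "bounded (V ` belief_simplex)"
    and "\<forall>q\<in>belief_simplex. (\<exists>\<mu>\<in>splits q. V q = dp_obj \<delta> M r V \<mu>)
                     \<and> (\<forall>\<mu>\<in>splits q. dp_obj \<delta> M r V \<mu> \<le> V q)"
    and "p \<in> Iset r"
  shows "return borel p \<in> splits p \<and> V p = dp_obj \<delta> M r V (return borel p)"
proof -
  note st = assms(1) and Vm = assms(5) and DP = assms(7)
  obtain B where B: "\<And>x. x \<in> belief_simplex \<Longrightarrow> \<bar>V x\<bar> \<le> B"
    using assms(6) unfolding bounded_real by auto
  have pS: "p \<in> belief_simplex" using assms(8) by (simp add: Iset_def)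
  have gm: "(\<lambda>q. V (phi M q)) \<in> borel_measurable borel"
    using measurable_compose[OF phi_meas Vm] by (simp add: o_def)
  have gb: "\<And>q. q \<in> belief_simplex \<Longrightarrow> \<bar>V (phi M q)\<bar> \<le> B"
    using B phi_simplex[OF st] by blast
  have Vconc: "l * V x + (1 - l) * V y \<le> V (l *\<^sub>R x + (1 - l) *\<^sub>R y)"
    if x: "x \<in> belief_simplex" and y: "y \<in> belief_simplex" and l: "0 \<le> l" "l \<le> 1" for x y l
  proof -
    obtain m1 where m1: "m1 \<in> splits x" "V x = dp_obj \<delta> M r V m1" using DP x by blast
    obtain m2 where m2: "m2 \<in> splits y" "V y = dp_obj \<delta> M r V m2" using DP y by blast
    note ms = mix_splits[OF m1(1) m2(1) l]
    have z: "l *\<^sub>R x + (1 - l) *\<^sub>R y \<in> belief_simplex" by (rule simplex_comb[OF x y l])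
    have "dp_obj \<delta> M r V (mix l m1 m2) = l * dp_obj \<delta> M r V m1 + (1 - l) * dp_obj \<delta> M r V m2"
    proof -
      have i: "integral\<^sup>L (mix l m1 m2) (\<lambda>q. V (phi M q)) = l * integral\<^sup>L m1 (\<lambda>q. V (phi M q)) + (1 - l) * integral\<^sup>L m2 (\<lambda>q. V (phi M q))"
        by (rule ms(2)[OF gm gb])
      show ?thesis unfolding dp_obj_def i ms(3)[OF Iset_sets] by (simp add: algebra_simps)
    qed
    moreover have "dp_obj \<delta> M r V (mix l m1 m2) \<le> V (l *\<^sub>R x + (1 - l) *\<^sub>R y)"
      using DP z ms(1) by blast
    ultimately show ?thesis using m1 m2 by simp
  qed
  have gconc: "l * V (phi M x) + (1 - l) * V (phi M y) \<le> V (phi M (l *\<^sub>R x + (1 - l) *\<^sub>R y))"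
    if "x \<in> belief_simplex" "y \<in> belief_simplex" "0 \<le> l" "l \<le> 1" for x y l
    using Vconc[OF phi_simplex[OF st that(1)] phi_simplex[OF st that(2)] that(3,4)] by (simp add: phi_lin)
  obtain m where m: "m \<in> splits p" "V p = dp_obj \<delta> M r V m" using DP pS by blast
  interpret P: prob_space m by (rule splitsD(2)[OF m(1)])
  have J: "integral\<^sup>L m (\<lambda>q. V (phi M q)) \<le> V (phi M p)"
    by (rule jensen_simplex[OF gconc gm gb m(1) pS])
  have "measure m (Iset r) \<le> 1" by (rule P.prob_le_1)
  then have a1: "(1 - \<delta>) * measure m (Iset r) \<le> (1 - \<delta>) * 1"
    using assms(4) by (intro mult_left_mono) auto
  have a2: "\<delta> * integral\<^sup>L m (\<lambda>q. V (phi M q)) \<le> \<delta> * V (phi M p)"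
    using J assms(3) by (rule mult_left_mono)
  have le: "V p \<le> (1 - \<delta>) + \<delta> * V (phi M p)"
    using add_mono[OF a1 a2] m(2) unfolding dp_obj_def by simp
  have rs: "return borel p \<in> splits p" by (rule return_splits[OF pS])
  have dr: "dp_obj \<delta> M r V (return borel p) = (1 - \<delta>) + \<delta> * V (phi M p)"
  proof -
    have "measure (return borel p) (Iset r) = 1"
      using measure_return[OF Iset_sets, of p r] assms(8) by simp
    then show ?thesis unfolding dp_obj_def using gm by (simp add: integral_return)
  qed
  have ge: "dp_obj \<delta> M r V (return borel p) \<le> V p"
    by (rule bspec[OF conjunct2[OF bspec[OF DP pS]] rs])
  have "V p = dp_obj \<delta> M r V (return borel p)" using ge le dr by linarith
  then show ?thesis using rs by blast
qed


end
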